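(* Let $\nu\in\mathbb{C}$ with $-\nu\notin\{0,1,2,\dots\}$. Then for each integer $m$ and $-\pi<\arg\zeta<\pi$, $$S_{\nu-1,\nu}(\zeta\mathrm{e}^{-m\pi i})=\mathrm{e}^{-m\nu\pi i}S_{\nu-1,\nu}(\zeta)+K'_+H^{(1)}_\nu(\zeta)+K'_-H^{(2)}_\nu(\zeta),$$ where $K'_\pm=\pi2^{\nu-2}i\,\mathrm{e}^{-m\nu\pi i}\Gamma(\nu)\big[U_{m-1}(\cos\nu\pi)\mathrm{e}^{(m\pm1)\nu\pi i}-m\big]$.
   Context: $J_\nu,Y_\nu$ are Bessel functions of the first and second kinds, $H^{(1)}_\nu=J_\nu+iY_\nu$, $H^{(2)}_\nu=J_\nu-iY_\nu$, $\psi=\Gamma'/\Gamma$. For every integer $k$, $U_{k-1}(\cos\theta)=\frac{\sin k\theta}{\sin\theta}$ (limit when $\sin\theta=0$). For $-\nu\notin\{0,1,2,\dots\}$ the Lommel function $S_{\nu-1,\nu}$ is defined by $S_{\nu-1,\nu}(\zeta)=\Gamma(\nu)\big[2^{\nu-1}J_\nu(\zeta)\log\zeta-2^{\nu-2}\pi Y_\nu(\zeta)-\frac{\zeta^\nu}{4}\sum_{k\ge0}\frac{(-1)^k(\zeta/2)^{2k}A(k)}{k!\Gamma(\nu+k+1)}\big]$, $A(k)=2\log2+\psi(\nu+k+1)+\psi(k+1)$. Right-hand side functions are on the principal branch $-\pi<\arg\zeta<\pi$; $g(\zeta\mathrm{e}^{-m\pi i})$ is the value of the analytic continuation of the principal branch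 at the point over $\zeta$ with argument $\arg\zeta-m\pi$. *)

theory Defs
  imports "HOL-Complex_Analysis.Complex_Analysis"
begin

text \<open>Bessel function of the first kind, principal branch (powr uses the principal Ln).\<close>
definition besselJ :: "complex \<Rightarrow> complex \<Rightarrow> complex" where
  "besselJ \<nu> z = (z / 2) powr \<nu> *
     (\<Sum>k. (-1) ^ k * (z / 2) ^ (2 * k) * rGamma (\<nu> + of_nat k + 1) / fact k)"

definition besselY_aux :: "complex \<Rightarrow> complex \<Rightarrow> complex" where
  "besselY_aux \<mu> z = (besselJ \<mu> z * cos (\<mu> * pi) - besselJ (- \<mu>) z) / sin (\<mu> * pi)"

definition besselY :: "complex \<Rightarrow> complex \<Rightarrow> complex" where
  "besselY \<nu> z = (if \<nu> \<notin> \<int> then besselY_aux \<nu> z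
                   else Lim (at \<nu>) (\<lambda>\<mu>. besselY_aux \<mu> z))"

definition hankel1 :: "complex \<Rightarrow> complex \<Rightarrow> complex" where
  "hankel1 \<nu> z = besselJ \<nu> z + \<i> * besselY \<nu> z"

definition hankel2 :: "complex \<Rightarrow> complex \<Rightarrow> complex" where
  "hankel2 \<nu> z = besselJ \<nu> z - \<i> * besselY \<nu> z"

text \<open>\<open>chebU_cos k \<theta>\<close> is \<open>U_{k-1}(cos \<theta>) = sin(k \<theta>)/sin \<theta>\<close> (limit when \<open>sin \<theta> = 0\<close>).\<close>
definition chebU_cos :: "int \<Rightarrow> complex \<Rightarrow> complex" where
  "chebU_cos k \<theta> = (if sin \<theta> \<noteq> 0 then sin (of_int k * \<theta>) / sin \<theta>
                     else Lim (at \<theta>) (\<lambda>t. sin (of_int k * t) / sin t))"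

definition lommelA :: "complex \<Rightarrow> nat \<Rightarrow> complex" where
  "lommelA \<nu> k = 2 * Ln 2 + Digamma (\<nu> + of_nat k + 1) + Digamma (of_nat k + 1)"

text \<open>Lommel function \<open>S_{\<nu>-1,\<nu>}\<close>, principal branch.\<close>
definition lommelS :: "complex \<Rightarrow> complex \<Rightarrow> complex" where
  "lommelS \<nu> z = Gamma \<nu> *
     (2 powr (\<nu> - 1) * besselJ \<nu> z * Ln z
      - 2 powr (\<nu> - 2) * pi * besselY \<nu> z
      - z powr \<nu> / 4 *
        (\<Sum>k. (-1) ^ k * (z / 2) ^ (2 * k) * lommelA \<nu> k / (fact k * Gamma (\<nu> + of_nat k + 1))))"

end

theory Submission
  imports Defs
begin


lemma rGamma_shift_bound:
  assumes "compact (K::complex set)"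
  obtains B where "B \<ge> 0" "\<And>u k. u \<in> K \<Longrightarrow> norm (rGamma (u + of_nat k)) \<le> B"
proof -
  obtain R where R: "\<And>u. u \<in> K \<Longrightarrow> norm u \<le> R"
    using compact_imp_bounded[OF assms] bounded_iff by blast
  define N where "N = nat \<lceil>R\<rceil> + 1"
  define K' where "K' = (\<Union>k\<in>{..N}. (+) (of_nat k) ` K)"
  have "compact K'" unfolding K'_def
    by (rule compact_UN) (auto intro: compact_translation assms)
  then have "compact (rGamma ` K')"
    by (rule compact_continuous_image[rotated]) (rule continuous_on_rGamma)
  have memK: "u + of_nat k \<in> K'" if "u \<in> K" "k \<le> N" for u k
  proof -
    have "u + of_nat k \<in> (+) (of_nat k) ` K" using that(1) by (rule rev_image_eqI) simp
    then show ?thesis unfolding K'_def using that(2) by blast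
  qed
  then obtain B where B: "B > 0" "\<And>x. x \<in> rGamma ` K' \<Longrightarrow> norm x \<le> B"
    using bounded_pos[of "rGamma ` K'"] compact_imp_bounded[OF \<open>compact (rGamma ` K')\<close>] by blast
  have main: "norm (rGamma (u + of_nat k)) \<le> B" if u: "u \<in> K" for u k
  proof (induction k)
    case 0
    have "u + of_nat 0 \<in> K'" using memK u by blast
    then show ?case using B by auto
  next
    case (Suc j)
    show ?case
    proof (cases "Suc j \<le> N")
      case True
      then have "u + of_nat (Suc j) \<in> K'" using memK u by blast
      then show ?thesis using B by auto
    next
      case False
      then have jN: "j \<ge> N" by simp
      have "real j \<ge> R + 1" using jN unfolding N_def by linarith
      moreover have "norm (of_nat j :: complex) \<le> norm (u + of_nat j) + norm u"
        using norm_triangle_ineq4[of "u + of_nat j" u] by simp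
      ultimately have nj: "norm (u + of_nat j) \<ge> 1" using R[OF u] by simp
      have eq: "(u + of_nat j) * rGamma (u + of_nat j + 1) = rGamma (u + of_nat j)"
        by (rule rGamma_plus1)
      have "norm (rGamma (u + of_nat (Suc j))) \<le> norm (u + of_nat j) * norm (rGamma (u + of_nat (Suc j)))"
        using nj by (simp add: mult_le_cancel_right1)
      also have "\<dots> = norm (rGamma (u + of_nat j))"
      proof -
        have e: "u + of_nat (Suc j) = u + of_nat j + 1" by simp
        show ?thesis by (simp only: e norm_mult[symmetric] eq)
      qed
      finally show ?thesis using Suc.IH by linarith
    qed
  qed
  show thesis using B(1) main by (intro that[of B]) auto
qed

lemma series_deriv_general:
  fixes f f' :: "nat \<Rightarrow> complex \<Rightarrow> complex"
  assumes d: "\<And>n x. (f n has_field_derivative f' n x) (at x)"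
    and b: "\<And>x. \<exists>d h. 0 < d \<and> summable h \<and> (\<forall>n. \<forall>y\<in>ball x d. norm (f n y) \<le> h n)"
  shows "((\<lambda>x. \<Sum>n. f n x) has_field_derivative (\<Sum>n. f' n x)) (at x)"
    and "summable (\<lambda>n. f n x)"
proof -
  have b': "\<exists>d h. 0 < d \<and> summable h \<and> (\<forall>\<^sub>F n in sequentially. \<forall>y\<in>ball x d \<inter> UNIV. norm (f n y) \<le> h n)" for x
  proof -
    obtain d h where "0 < d" "summable h" "\<forall>n. \<forall>y\<in>ball x d. norm (f n y) \<le> h n"
      using b[of x] by blast
    then show ?thesis by (intro exI[of _ d] exI[of _ h]) (simp add: always_eventually)
  qed
  have "\<exists>g g'. \<forall>x \<in> UNIV. ((\<lambda>n. f n x) sums g x) \<and> ((\<lambda>n. f' n x) sums g' x) \<and> (g has_field_derivative g' x) (at x)"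
    by (rule series_and_derivative_comparison_local[OF open_UNIV d b'])
  then obtain g g' where gg: "\<And>x. ((\<lambda>n. f n x) sums g x) \<and> ((\<lambda>n. f' n x) sums g' x) \<and> (g has_field_derivative g' x) (at x)"
    by blast
  have "(\<lambda>x. \<Sum>n. f n x) = g" using gg by (auto simp: sums_iff)
  moreover have "(\<Sum>n. f' n x) = g' x" using gg by (auto simp: sums_iff)
  ultimately show "((\<lambda>x. \<Sum>n. f n x) has_field_derivative (\<Sum>n. f' n x)) (at x)" using gg by simp
  show "summable (\<lambda>n. f n x)" using gg by (auto simp: sums_iff)
qed


definition ES :: "(nat \<Rightarrow> complex) \<Rightarrow> complex \<Rightarrow> complex" where
  "ES c z = (\<Sum>k. c k * (z/2)^(2*k))"

lemma ES_entire_aux: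
  fixes c :: "nat \<Rightarrow> complex"
  assumes C: "C \<ge> 0" and bound: "\<And>n. norm (c n) \<le> B * C^n / fact n"
  shows "ES c holomorphic_on UNIV" and "summable (\<lambda>n. c n * (z/2)^(2*n))"
proof -
  define f where "f = (\<lambda>n (z::complex). c n * (z/2)^(2*n))"
  have d: "(f n has_field_derivative deriv (f n) x) (at x)" for n x
  proof -
    have "f n holomorphic_on UNIV" unfolding f_def by (intro holomorphic_intros) auto
    then have "f n field_differentiable (at x)"
      using holomorphic_on_imp_differentiable_at by blast
    then show ?thesis using DERIV_deriv_iff_field_differentiable by blast
  qed
  have "norm (c 0) \<le> B" using bound[of 0] by simp
  then have B0: "B \<ge> 0" by (meson order_trans norm_ge_zero)
  have b: "\<exists>d h. 0 < d \<and> summable h \<and> (\<forall>n. \<forall>y\<in>ball x d. norm (f n y) \<le> h n)" for x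
  proof -
    define a where "a = C * ((norm x + 1)^2 / 4)"
    define h where "h = (\<lambda>n. B * (inverse (fact n) * a^n))"
    have "summable h" unfolding h_def by (intro summable_mult summable_exp)
    moreover have "norm (f n y) \<le> h n" if y: "y \<in> ball x 1" for n y
    proof -
      have ny: "norm y \<le> norm x + 1" using y norm_triangle_ineq2[of y x]
        by (simp add: dist_norm norm_minus_commute)
      have "norm (f n y) = norm (c n) * (norm y / 2)^(2*n)"
        by (simp add: f_def norm_mult norm_power norm_divide)
      also have "\<dots> \<le> (B * C^n / fact n) * ((norm x + 1) / 2)^(2*n)"
      proof (rule mult_mono[OF bound])
        show "(norm y / 2) ^ (2 * n) \<le> ((norm x + 1) / 2) ^ (2 * n)"
          by (rule power_mono) (use ny in auto)
        show "0 \<le> B * C ^ n / fact n" using B0 C by simp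
        show "0 \<le> (norm y / 2) ^ (2 * n)" by simp
      qed
      also have "\<dots> = h n"
      proof -
        have "((norm x + 1) / 2)^(2*n) = ((norm x + 1)^2/4)^n"
          by (simp add: power_mult power_divide)
        then show ?thesis
          unfolding h_def a_def power_mult_distrib divide_inverse by (simp only: mult_ac)
      qed
      finally show ?thesis .
    qed
    ultimately show ?thesis by (intro exI[of _ 1] exI[of _ h]) auto
  qed
  have "((\<lambda>x. \<Sum>n. f n x) has_field_derivative (\<Sum>n. deriv (f n) x)) (at x)" for x
    by (rule series_deriv_general(1)[OF d b])
  then show "ES c holomorphic_on UNIV"
    unfolding holomorphic_on_def field_differentiable_def ES_def f_def
    by (blast intro: has_field_derivative_at_within)
  show "summable (\<lambda>n. c n * (z/2)^(2*n))"
    using series_deriv_general(2)[OF d b] unfolding f_def .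
qed


definition cJ :: "complex \<Rightarrow> nat \<Rightarrow> complex" where
  "cJ \<mu> k = (-1)^k * rGamma (\<mu> + of_nat k + 1) / fact k"
definition cD :: "complex \<Rightarrow> nat \<Rightarrow> complex" where
  "cD \<mu> k = (-1)^k * deriv rGamma (\<mu> + of_nat k + 1) / fact k"
definition cA :: "complex \<Rightarrow> nat \<Rightarrow> complex" where
  "cA \<nu> k = (-1)^k * lommelA \<nu> k / (fact k * Gamma (\<nu> + of_nat k + 1))"

lemma rGamma_has_deriv: "(rGamma has_field_derivative deriv rGamma w) (at w)"
  using DERIV_deriv_iff_field_differentiable field_differentiable_rGamma by blast

lemma rGamma_pt_bound: fixes \<mu> :: complex obtains B where "B \<ge> 0" "\<And>k. norm (rGamma (\<mu> + of_nat k + 1)) \<le> B"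
proof -
  obtain B where B: "B \<ge> 0" "\<And>u k. u \<in> {\<mu> + 1} \<Longrightarrow> norm (rGamma (u + of_nat k)) \<le> B"
    by (rule rGamma_shift_bound[OF compact_sing[of "\<mu>+1"]]) blast
  have "norm (rGamma (\<mu> + of_nat k + 1)) \<le> B" for k
    using B(2)[of "\<mu>+1" k] by (simp add: add_ac)
  from B(1) this show thesis by (rule that)
qed

lemma deriv_rGamma_bound: fixes \<mu> :: complex obtains B where "B \<ge> 0" "\<And>k. norm (deriv rGamma (\<mu> + of_nat k + 1)) \<le> B"
proof -
  obtain B where B: "B \<ge> 0" "\<And>u k. u \<in> cball (\<mu> + 1) 1 \<Longrightarrow> norm (rGamma (u + of_nat k)) \<le> B"
    by (rule rGamma_shift_bound[OF compact_cball[of "\<mu>+1" 1]]) blast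
  have "norm (deriv rGamma (\<mu> + of_nat k + 1)) \<le> B" for k
  proof -
    have "norm ((deriv ^^ 1) rGamma (\<mu> + of_nat k + 1)) \<le> fact 1 * B / 1 ^ 1"
    proof (rule Cauchy_inequality)
      show "rGamma holomorphic_on ball (\<mu> + of_nat k + 1) 1" by (rule holomorphic_rGamma)
      show "continuous_on (cball (\<mu> + of_nat k + 1) 1) rGamma" by (rule continuous_on_rGamma)
      show "(0::real) < 1" by simp
      fix x assume x: "norm (\<mu> + of_nat k + 1 - x) = 1"
      have "x - of_nat k \<in> cball (\<mu> + 1) 1"
        using x by (simp add: dist_norm algebra_simps)
      from B(2)[OF this, of k] show "norm (rGamma x) \<le> B" by simp
    qed
    then show ?thesis by simp
  qed
  from B(1) this show thesis by (rule that)
qed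

lemma norm_Digamma_nat: "norm (Digamma (of_nat k + 1 :: complex)) \<le> norm (Digamma (1::complex)) + real k"
proof (induction k)
  case 0 then show ?case by simp
next
  case (Suc k)
  have ne: "(of_nat k + 1 :: complex) \<noteq> 0"
    by (metis of_nat_Suc of_nat_eq_0_iff nat.distinct(1) add.commute)
  have "Digamma (of_nat (Suc k) + 1 :: complex) = Digamma (of_nat k + 1) + 1 / (of_nat k + 1)"
    using Digamma_plus1[OF ne] by simp
  moreover have "norm (1 / (of_nat k + 1 :: complex)) \<le> 1"
  proof -
    have "norm (of_nat k + 1 :: complex) = real k + 1"
      by (metis norm_of_nat of_nat_Suc add.commute of_nat_1 of_nat_add)
    then show ?thesis by (simp add: norm_divide)
  qed
  ultimately have "norm (Digamma (of_nat (Suc k) + 1 :: complex)) \<le> norm (Digamma (of_nat k + 1 :: complex)) + 1"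
    using norm_triangle_ineq[of "Digamma (of_nat k + 1 :: complex)" "1 / (of_nat k + 1)"] by simp
  then show ?case using Suc.IH by simp
qed

lemma cJ_bound: obtains B where "\<And>k. norm (cJ \<mu> k) \<le> B * 1^k / fact k"
proof -
  obtain B where B: "B \<ge> 0" "\<And>k. norm (rGamma (\<mu> + of_nat k + 1)) \<le> B"
    by (rule rGamma_pt_bound[of \<mu>]) blast
  have "norm (cJ \<mu> k) \<le> B * 1^k / fact k" for k
    using B(2)[of k] by (simp add: cJ_def norm_mult norm_divide norm_power divide_right_mono)
  then show thesis by (rule that)
qed

lemma cD_bound: obtains B where "\<And>k. norm (cD \<mu> k) \<le> B * 1^k / fact k"
proof -
  obtain B where B: "B \<ge> 0" "\<And>k. norm (deriv rGamma (\<mu> + of_nat k + 1)) \<le> B"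
    by (rule deriv_rGamma_bound[of \<mu>]) blast
  have "norm (cD \<mu> k) \<le> B * 1^k / fact k" for k
    using B(2)[of k] by (simp add: cD_def norm_mult norm_divide norm_power divide_right_mono)
  then show thesis by (rule that)
qed

lemma not_nonpos_shift:
  assumes "\<And>n::nat. \<nu> \<noteq> - of_nat n"
  shows "\<nu> + of_nat k + 1 \<notin> \<int>\<^sub>\<le>\<^sub>0"
proof
  assume "\<nu> + of_nat k + 1 \<in> \<int>\<^sub>\<le>\<^sub>0"
  then obtain n where "\<nu> + of_nat k + 1 = - of_nat n" by (elim nonpos_Ints_cases')
  then have h: "\<nu> + of_nat k + 1 = - of_nat n" .
  have "\<nu> = - of_nat n - of_nat k - 1" by (simp add: h[symmetric])
  then have "\<nu> = - of_nat (n + k + 1)" by simp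
  with assms show False by blast
qed

lemma cA_bound:
  assumes "\<And>n::nat. \<nu> \<noteq> - of_nat n"
  obtains B where "\<And>k. norm (cA \<nu> k) \<le> B * 2^k / fact k"
proof -
  obtain B1 where B1: "B1 \<ge> 0" "\<And>k. norm (rGamma (\<nu> + of_nat k + 1)) \<le> B1"
    by (rule rGamma_pt_bound[of \<nu>]) blast
  obtain B2 where B2: "B2 \<ge> 0" "\<And>k. norm (deriv rGamma (\<nu> + of_nat k + 1)) \<le> B2"
    by (rule deriv_rGamma_bound[of \<nu>]) blast
  define M where "M = (2 * norm (Ln 2 :: complex) + norm (Digamma (1::complex)) + 1) * B1 + B2"
  have "norm (cA \<nu> k) \<le> M * 2^k / fact k" for k
  proof -
    let ?z = "\<nu> + of_nat k + 1"
    have nz: "?z \<notin> \<int>\<^sub>\<le>\<^sub>0" by (rule not_nonpos_shift[OF assms])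
    have dr: "deriv rGamma ?z = - rGamma ?z * Digamma ?z"
      by (rule DERIV_imp_deriv[OF has_field_derivative_rGamma_no_nonpos_int[OF nz]])
    have Gnz: "Gamma ?z \<noteq> 0" by (rule Gamma_nonzero[OF nz])
    have e1: "Digamma ?z / Gamma ?z = - deriv rGamma ?z"
      by (simp add: dr rGamma_inverse_Gamma divide_inverse mult.commute)
    have e2: "lommelA \<nu> k / Gamma ?z = (2 * Ln 2 + Digamma (of_nat k + 1)) * rGamma ?z + Digamma ?z / Gamma ?z"
      using Gnz by (simp add: lommelA_def rGamma_inverse_Gamma field_simps)
    have eqA: "lommelA \<nu> k / Gamma ?z = (2 * Ln 2 + Digamma (of_nat k + 1)) * rGamma ?z - deriv rGamma ?z"
      unfolding e2 e1 by simp
    have "norm (lommelA \<nu> k / Gamma ?z) \<le> norm ((2 * Ln 2 + Digamma (of_nat k + 1)) * rGamma ?z) + norm (deriv rGamma ?z)"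
      unfolding eqA by (rule norm_triangle_ineq4)
    also have "\<dots> \<le> (2 * norm (Ln 2 :: complex) + (norm (Digamma (1::complex)) + real k)) * B1 + B2"
    proof -
      have "norm (2 * Ln 2 + Digamma (of_nat k + 1 :: complex)) \<le> 2 * norm (Ln 2 :: complex) + (norm (Digamma (1::complex)) + real k)"
        using norm_triangle_ineq[of "2 * Ln 2 :: complex" "Digamma (of_nat k + 1)"] norm_Digamma_nat[of k]
        by (simp add: norm_mult)
      then have "norm ((2 * Ln 2 + Digamma (of_nat k + 1)) * rGamma ?z) \<le> (2 * norm (Ln 2 :: complex) + (norm (Digamma (1::complex)) + real k)) * B1"
        unfolding norm_mult by (rule mult_mono) (use B1 in auto)
      then show ?thesis using B2(2)[of k] by linarith
    qed
    also have "\<dots> \<le> M * 2^k"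
    proof -
      have k2: "real k + 1 \<le> 2^k"
      proof -
        have "k + 1 \<le> 2^k" using less_exp[of k] by (simp add: Suc_le_eq)
        then show ?thesis by (metis of_nat_1 of_nat_add of_nat_le_iff of_nat_numeral of_nat_power)
      qed
      have a: "(2 * norm (Ln 2 :: complex) + (norm (Digamma (1::complex)) + real k)) * B1
            \<le> (2 * norm (Ln 2 :: complex) + norm (Digamma (1::complex)) + 1) * B1 * 2^k"
      proof -
        have "2 * norm (Ln 2 :: complex) + (norm (Digamma (1::complex)) + real k)
             \<le> (2 * norm (Ln 2 :: complex) + norm (Digamma (1::complex)) + 1) * 2^k"
        proof -
          have p: "(1::real) \<le> 2^k" by simp
          have "2 * norm (Ln 2 :: complex) + norm (Digamma (1::complex)) \<le> (2 * norm (Ln 2 :: complex) + norm (Digamma (1::complex))) * 2^k"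
          proof -
            have nn: "0 \<le> 2 * norm (Ln 2 :: complex) + norm (Digamma (1::complex))" by simp
            show ?thesis using mult_left_mono[OF p nn] by simp
          qed
          then show ?thesis using k2 by (simp add: algebra_simps)
        qed
        from mult_right_mono[OF this B1(1)] show ?thesis by (simp add: mult_ac)
      qed
      have b: "B2 \<le> B2 * 2^k" using B2(1) by (simp add: mult_le_cancel_left1)
      have "M * 2^k = (2 * norm (Ln 2 :: complex) + norm (Digamma (1::complex)) + 1) * B1 * 2^k + B2 * 2^k"
        by (simp add: M_def distrib_right)
      then show ?thesis using a b by linarith
    qed
    finally have main: "norm (lommelA \<nu> k / Gamma ?z) \<le> M * 2^k" .
    have "cA \<nu> k = (-1)^k * (lommelA \<nu> k / Gamma ?z) / fact k"
      by (simp add: cA_def)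
    then have "norm (cA \<nu> k) = norm (lommelA \<nu> k / Gamma ?z) / fact k"
      by (simp add: norm_mult norm_divide norm_power)
    also have "\<dots> \<le> M * 2^k / fact k" using main by (simp add: divide_right_mono)
    finally show ?thesis .
  qed
  then show thesis by (rule that)
qed


lemma ES_cJ_holo: "ES (cJ \<mu>) holomorphic_on UNIV"
proof -
  obtain B where "\<And>k. norm (cJ \<mu> k) \<le> B * 1^k / fact k" by (rule cJ_bound[of \<mu>]) blast
  then show ?thesis by (rule ES_entire_aux(1)[of 1, OF zero_le_one])
qed

lemma ES_cJ_summable: "summable (\<lambda>n. cJ \<mu> n * (z/2)^(2*n))"
proof -
  obtain B where "\<And>k. norm (cJ \<mu> k) \<le> B * 1^k / fact k" by (rule cJ_bound[of \<mu>]) blast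
  then show ?thesis by (rule ES_entire_aux(2)[of 1, OF zero_le_one])
qed

lemma ES_cD_holo: "ES (cD \<mu>) holomorphic_on UNIV"
proof -
  obtain B where "\<And>k. norm (cD \<mu> k) \<le> B * 1^k / fact k" by (rule cD_bound[of \<mu>]) blast
  then show ?thesis by (rule ES_entire_aux(1)[of 1, OF zero_le_one])
qed

lemma ES_cA_holo:
  assumes "\<And>n::nat. \<nu> \<noteq> - of_nat n"
  shows "ES (cA \<nu>) holomorphic_on UNIV"
proof -
  obtain B where "\<And>k. norm (cA \<nu> k) \<le> B * 2^k / fact k" by (rule cA_bound[of \<nu>, OF assms]) blast
  from this show ?thesis by (rule ES_entire_aux(1)[of 2 _ B, rotated]) simp
qed

lemma ES_sign:
  assumes "s^2 = 1"
  shows "ES c (z * s) = ES c z"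
proof -
  have "(z * s / 2)^2 = (z/2)^2" using assms by (simp add: power_mult_distrib power_divide)
  then have "(z * s / 2)^(2*k) = (z/2)^(2*k)" for k by (simp add: power_mult)
  then show ?thesis unfolding ES_def by simp
qed

lemma ES_cJ_param_deriv: "((\<lambda>\<mu>. ES (cJ \<mu>) z) has_field_derivative ES (cD \<mu>) z) (at \<mu>)"
proof -
  define f where "f = (\<lambda>k \<mu>. cJ \<mu> k * (z/2)^(2*k))"
  define f' where "f' = (\<lambda>k \<mu>. cD \<mu> k * (z/2)^(2*k))"
  have d: "(f k has_field_derivative f' k \<mu>) (at \<mu>)" for k \<mu>
  proof -
    define a where "a = (-1)^k * (z/2)^(2*k) / fact k"
    have e1: "f k = (\<lambda>\<mu>. a * rGamma (\<mu> + (of_nat k + 1)))"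
      by (rule ext) (simp add: f_def a_def cJ_def add.assoc field_simps)
    have e2: "f' k \<mu> = a * deriv rGamma (\<mu> + (of_nat k + 1))"
      by (simp add: f'_def a_def cD_def add.assoc field_simps)
    have "((\<lambda>\<mu>. rGamma (\<mu> + (of_nat k + 1))) has_field_derivative deriv rGamma (\<mu> + (of_nat k + 1))) (at \<mu>)"
      by (rule DERIV_shift[THEN iffD1, OF rGamma_has_deriv])
    then have "((\<lambda>\<mu>. a * rGamma (\<mu> + (of_nat k + 1))) has_field_derivative a * deriv rGamma (\<mu> + (of_nat k + 1))) (at \<mu>)"
      by (rule DERIV_cmult)
    then show ?thesis unfolding e1 e2 .
  qed
  have b: "\<exists>d h. 0 < d \<and> summable h \<and> (\<forall>n. \<forall>y\<in>ball x d. norm (f n y) \<le> h n)" for x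
  proof -
    obtain B where B: "B \<ge> 0" "\<And>u k. u \<in> cball (x + 1) 1 \<Longrightarrow> norm (rGamma (u + of_nat k)) \<le> B"
      by (rule rGamma_shift_bound[OF compact_cball[of "x+1" 1]]) blast
    define h where "h = (\<lambda>k. B * (inverse (fact k) * ((norm z / 2)^2)^k))"
    have "summable h" unfolding h_def by (intro summable_mult summable_exp)
    moreover have "norm (f k y) \<le> h k" if y: "y \<in> ball x 1" for k y
    proof -
      have "y + 1 \<in> cball (x + 1) 1" using y by (simp add: dist_norm)
      from B(2)[OF this, of k] have r: "norm (rGamma (y + of_nat k + 1)) \<le> B" by (simp add: add_ac)
      have n1: "norm (cJ y k) = norm (rGamma (y + of_nat k + 1)) / fact k"
        by (simp add: cJ_def norm_mult norm_divide norm_power)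
      have n2: "norm ((z/2)^(2*k)) = ((norm z/2)^2)^k"
      proof -
        have "norm ((z/2)^(2*k)) = (norm z/2)^(2*k)" by (simp add: norm_power norm_divide)
        then show ?thesis by (simp only: power_mult)
      qed
      have "norm (f k y) = norm (rGamma (y + of_nat k + 1)) * (inverse (fact k) * ((norm z / 2)^2)^k)"
        unfolding f_def norm_mult n1 n2 by (simp only: divide_inverse mult.assoc)
      also have "\<dots> \<le> h k" unfolding h_def by (rule mult_right_mono[OF r]) simp
      finally show ?thesis .
    qed
    ultimately show ?thesis by (intro exI[of _ 1] exI[of _ h]) auto
  qed
  show ?thesis
    using series_deriv_general(1)[OF d b, of \<mu>] unfolding f_def f'_def ES_def .
qed

lemma rGamma_nat1: "rGamma (of_nat j + 1 :: complex) = inverse (fact j)"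
  using Gamma_fact[of j] by (simp add: rGamma_inverse_Gamma add.commute)

lemma ES_cJ_neg_nat:
  "ES (cJ (- of_nat n)) z = (-1)^n * (z/2)^(2*n) * ES (cJ (of_nat n)) z"
proof -
  define g where "g = (\<lambda>k. cJ (- of_nat n) k * (z/2)^(2*k))"
  have sh: "g (j + n) = (-1)^n * (z/2)^(2*n) * (cJ (of_nat n) j * (z/2)^(2*j))" for j
  proof -
    have a1: "- of_nat n + of_nat (j + n) + 1 = (of_nat j + 1 :: complex)" by simp
    have a2: "(of_nat n + of_nat j + 1 :: complex) = of_nat (n + j) + 1" by simp
    show ?thesis
      unfolding g_def cJ_def a1 a2 rGamma_nat1 distrib_left power_add
      by (simp only: divide_inverse add.commute[of j n] mult_ac)
  qed
  have z: "(\<Sum>k<n. g k) = 0"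
  proof (rule sum.neutral, rule ballI)
    fix k assume "k \<in> {..<n}"
    then have kn: "k < n" by simp
    have "- of_nat n + of_nat k + 1 = (- of_nat (n - k - 1) :: complex)"
      using kn by (simp add: of_nat_diff)
    then show "g k = 0" unfolding g_def cJ_def by simp
  qed
  have "(\<lambda>j. cJ (of_nat n) j * (z/2)^(2*j)) sums ES (cJ (of_nat n)) z"
    unfolding ES_def by (rule summable_sums[OF ES_cJ_summable])
  then have "(\<lambda>j. (-1)^n * (z/2)^(2*n) * (cJ (of_nat n) j * (z/2)^(2*j))) sums ((-1)^n * (z/2)^(2*n) * ES (cJ (of_nat n)) z)"
    by (rule sums_mult)
  then have "(\<lambda>j. g (j + n)) sums ((-1)^n * (z/2)^(2*n) * ES (cJ (of_nat n)) z)"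
    unfolding sh .
  then have "g sums ((-1)^n * (z/2)^(2*n) * ES (cJ (of_nat n)) z)"
    using sums_iff_shift[of g n] z by simp
  then show ?thesis unfolding ES_def g_def by (simp add: sums_iff)
qed


definition Jh :: "complex \<Rightarrow> complex \<Rightarrow> complex" where
  "Jh \<mu> w = exp (\<mu> * (w - Ln 2)) * ES (cJ \<mu>) (exp w)"

definition Yh :: "complex \<Rightarrow> complex \<Rightarrow> complex" where
  "Yh \<mu> w = (Jh \<mu> w * cos (\<mu> * pi) - Jh (- \<mu>) w) / sin (\<mu> * pi)"

definition Ys :: "complex \<Rightarrow> complex \<Rightarrow> complex" where
  "Ys \<nu> w = (if \<nu> \<notin> \<int> then Yh \<nu> w else Lim (at \<nu>) (\<lambda>\<mu>. Yh \<mu> w))"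

definition FF :: "complex \<Rightarrow> complex \<Rightarrow> complex" where
  "FF \<nu> w = Gamma \<nu> * (2 powr (\<nu> - 1) * Jh \<nu> w * w - 2 powr (\<nu> - 2) * pi * Ys \<nu> w
      - exp (\<nu> * w) / 4 * ES (cA \<nu>) (exp w))"

lemma besselJ_ES: "besselJ \<mu> z = (z/2) powr \<mu> * ES (cJ \<mu>) z"
proof -
  have "(-1) ^ k * (z / 2) ^ (2 * k) * rGamma (\<mu> + of_nat k + 1) / fact k = cJ \<mu> k * (z/2)^(2*k)" for k
    unfolding cJ_def by (simp only: divide_inverse mult_ac)
  then show ?thesis unfolding besselJ_def ES_def by simp
qed

lemma Ln2: "Ln (2::complex) = of_real (ln 2)"
  using Ln_of_real[of 2] by simp

lemma exp_half: "exp w / 2 = exp (w - Ln 2)"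
  by (simp add: exp_diff)

lemma strip_Ln:
  assumes "- pi < Im w" "Im w < pi"
  shows "Ln (exp w) = w" and "Ln (exp w / 2) = w - Ln 2"
proof -
  show "Ln (exp w) = w" using assms by simp
  have "Im (w - Ln 2) = Im w" by (simp add: Ln2)
  then show "Ln (exp w / 2) = w - Ln 2" unfolding exp_half using assms by simp
qed

lemma besselJ_strip:
  assumes "- pi < Im w" "Im w < pi"
  shows "besselJ \<mu> (exp w) = Jh \<mu> w"
proof -
  have "(exp w / 2) powr \<mu> = exp (\<mu> * (w - Ln 2))"
    unfolding powr_def using strip_Ln(2)[OF assms] by simp
  then show ?thesis unfolding besselJ_ES Jh_def by simp
qed

lemma besselY_strip:
  assumes "- pi < Im w" "Im w < pi"
  shows "besselY \<nu> (exp w) = Ys \<nu> w"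
proof -
  have "besselY_aux \<mu> (exp w) = Yh \<mu> w" for \<mu>
    unfolding besselY_aux_def Yh_def besselJ_strip[OF assms] ..
  then show ?thesis unfolding besselY_def Ys_def by simp
qed

lemma lommelS_strip:
  assumes "- pi < Im w" "Im w < pi"
  shows "lommelS \<nu> (exp w) = FF \<nu> w"
proof -
  have "(-1) ^ k * (z / 2) ^ (2 * k) * lommelA \<nu> k / (fact k * Gamma (\<nu> + of_nat k + 1)) = cA \<nu> k * (z/2)^(2*k)" for k z
    unfolding cA_def by (simp only: divide_inverse mult_ac)
  then have e: "(\<Sum>k. (-1) ^ k * (z / 2) ^ (2 * k) * lommelA \<nu> k / (fact k * Gamma (\<nu> + of_nat k + 1))) = ES (cA \<nu>) z" for z
    unfolding ES_def by simp
  have p: "exp w powr \<nu> = exp (\<nu> * w)"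
    unfolding powr_def using strip_Ln(1)[OF assms] by simp
  show ?thesis
    unfolding lommelS_def FF_def e p besselJ_strip[OF assms] besselY_strip[OF assms] strip_Ln(1)[OF assms] ..
qed

lemma exp_shift_sq: "(exp (- ((of_int m :: complex) * of_real pi * \<i>)))^2 = (1::complex)"
proof -
  have "(exp (- ((of_int m :: complex) * of_real pi * \<i>)))^2 = exp (2 * of_int (-m) * of_real pi * \<i>)"
    by (simp add: exp_of_nat_mult[symmetric] algebra_simps flip: exp_add)
  also have "\<dots> = 1" unfolding exp_eq_1 by (intro conjI exI[of _ "-m"]) simp_all
  finally show ?thesis .
qed

lemma Jh_shift: "Jh \<mu> (w - (of_int m :: complex) * of_real pi * \<i>) = exp (- of_int m * \<mu> * of_real pi * \<i>) * Jh \<mu> w"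
proof -
  have e1: "exp (w - (of_int m :: complex) * of_real pi * \<i>) = exp w * exp (- ((of_int m :: complex) * of_real pi * \<i>))"
    by (simp add: exp_diff exp_minus divide_inverse)
  have e2: "ES (cJ \<mu>) (exp (w - (of_int m :: complex) * of_real pi * \<i>)) = ES (cJ \<mu>) (exp w)"
    unfolding e1 by (rule ES_sign[OF exp_shift_sq])
  have e3: "exp (\<mu> * (w - (of_int m :: complex) * of_real pi * \<i> - Ln 2)) = exp (- of_int m * \<mu> * of_real pi * \<i>) * exp (\<mu> * (w - Ln 2))"
    by (simp add: exp_add[symmetric] algebra_simps)
  show ?thesis unfolding Jh_def e2 e3 by simp
qed


lemma alg_Y:
  fixes s P Q J J' c S :: complex
  assumes "s \<noteq> 0" "P * Q = 1" "S = (P - Q) / (2 * \<i>)"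
  shows "(Q * J * c - P * J') / s = P * ((J * c - J') / s) - 2 * \<i> * (S / s) * c * J"
  unfolding assms(3) using assms(1) by (simp add: field_simps)

lemma exp_mpi_prod: fixes \<mu> :: complex shows "exp (of_int m * \<mu> * pi * \<i>) * exp (- of_int m * \<mu> * pi * \<i>) = 1"
  by (simp add: exp_add[symmetric])

lemma sin_m_exp: fixes \<mu> :: complex shows "sin (of_int m * (\<mu> * pi)) = (exp (of_int m * \<mu> * pi * \<i>) - exp (- of_int m * \<mu> * pi * \<i>)) / (2 * \<i>)"
proof -
  have a: "\<i> * (of_int m * (\<mu> * pi)) = of_int m * \<mu> * pi * \<i>" by (simp add: mult_ac)
  have b: "- (of_int m * \<mu> * pi * \<i>) = - of_int m * \<mu> * pi * \<i>" by simp
  show ?thesis unfolding sin_exp_eq a b ..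
qed

lemma Yh_shift:
  fixes \<mu> :: complex
  assumes "sin (\<mu> * pi) \<noteq> 0"
  shows "Yh \<mu> (w - (of_int m :: complex) * of_real pi * \<i>) = exp (of_int m * \<mu> * pi * \<i>) * Yh \<mu> w
           - 2 * \<i> * (sin (of_int m * (\<mu> * pi)) / sin (\<mu> * pi)) * cos (\<mu> * pi) * Jh \<mu> w"
proof -
  have ee: "exp (- of_int m * - \<mu> * pi * \<i>) = exp (of_int m * \<mu> * pi * \<i>)" by simp
  show ?thesis
    unfolding Yh_def Jh_shift ee
    by (rule alg_Y[OF assms exp_mpi_prod[symmetric, THEN sym] sin_m_exp])
qed

lemma holo_exp_comp: "f holomorphic_on UNIV \<Longrightarrow> (\<lambda>w. f (exp w)) holomorphic_on UNIV"
proof -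
  assume f: "f holomorphic_on UNIV"
  have "(\<lambda>x. exp x) holomorphic_on UNIV" by (intro holomorphic_intros)
  moreover have "f holomorphic_on (exp ` UNIV)" using f by (rule holomorphic_on_subset) simp
  ultimately show ?thesis using holomorphic_on_compose[of exp UNIV f] by (simp add: o_def)
qed

lemma Jh_holo: "Jh \<mu> holomorphic_on UNIV"
proof -
  have "(\<lambda>w. ES (cJ \<mu>) (exp w)) holomorphic_on UNIV" by (rule holo_exp_comp[OF ES_cJ_holo])
  then show ?thesis unfolding Jh_def[abs_def] by (intro holomorphic_intros)
qed

definition JD :: "complex \<Rightarrow> complex \<Rightarrow> complex" where
  "JD \<mu> w = (w - Ln 2) * Jh \<mu> w + exp (\<mu> * (w - Ln 2)) * ES (cD \<mu>) (exp w)"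

lemma JD_holo: "JD \<mu> holomorphic_on UNIV"
proof -
  have "(\<lambda>w. ES (cD \<mu>) (exp w)) holomorphic_on UNIV" by (rule holo_exp_comp[OF ES_cD_holo])
  then show ?thesis unfolding JD_def[abs_def] using Jh_holo by (intro holomorphic_intros)
qed

lemma Jh_param_deriv: "((\<lambda>\<mu>. Jh \<mu> w) has_field_derivative JD \<mu> w) (at \<mu>)"
proof -
  have e: "((\<lambda>\<mu>. exp (\<mu> * (w - Ln 2))) has_field_derivative exp (\<mu> * (w - Ln 2)) * (w - Ln 2)) (at \<mu>)"
    by (auto intro!: derivative_eq_intros)
  have "((\<lambda>\<mu>. exp (\<mu> * (w - Ln 2)) * ES (cJ \<mu>) (exp w)) has_field_derivative
      exp (\<mu> * (w - Ln 2)) * (w - Ln 2) * ES (cJ \<mu>) (exp w) + ES (cD \<mu>) (exp w) * exp (\<mu> * (w - Ln 2))) (at \<mu>)"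
    by (rule DERIV_mult[OF e ES_cJ_param_deriv])
  then show ?thesis
    unfolding Jh_def[abs_def] JD_def by (rule DERIV_cong) (simp add: Jh_def algebra_simps)
qed

definition Nd :: "complex \<Rightarrow> complex \<Rightarrow> complex" where
  "Nd \<mu> w = JD \<mu> w * cos (\<mu> * pi) - sin (\<mu> * pi) * pi * Jh \<mu> w + JD (- \<mu>) w"

lemma N_deriv: "((\<lambda>\<mu>. Jh \<mu> w * cos (\<mu> * pi) - Jh (- \<mu>) w) has_field_derivative Nd \<mu> w) (at \<mu>)"
proof -
  have jn: "((\<lambda>\<mu>. Jh (- \<mu>) w) has_field_derivative JD (- \<mu>) w * (- 1)) (at \<mu>)"
    by (rule DERIV_chain2[OF Jh_param_deriv]) (auto intro!: derivative_eq_intros)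
  have c: "((\<lambda>\<mu>. cos (\<mu> * pi)) has_field_derivative - sin (\<mu> * pi) * pi) (at \<mu>)"
    by (auto intro!: derivative_eq_intros)
  show ?thesis
    by (rule DERIV_cong[OF DERIV_diff[OF DERIV_mult[OF Jh_param_deriv c] jn]]) (simp add: Nd_def algebra_simps)
qed

lemma Nd_holo: "Nd \<mu> holomorphic_on UNIV"
  unfolding Nd_def[abs_def] using JD_holo Jh_holo by (intro holomorphic_intros)


lemma cos_nat_pi: "cos (of_nat n * of_real pi) = ((-1)^n :: complex)"
proof -
  have "of_nat n * of_real pi = (of_real (real n * pi) :: complex)" by simp
  then show ?thesis by (simp add: cos_of_real)
qed

lemma sin_nat_pi: "sin (of_nat n * of_real pi) = (0 :: complex)"
proof -
  have "of_nat n * of_real pi = (of_real (real n * pi) :: complex)" by simp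
  then show ?thesis by (simp add: sin_of_real)
qed

lemma N_zero: "Jh (of_nat n) w * cos (of_nat n * of_real pi) - Jh (- of_nat n) w = 0"
proof -
  define a where "a = w - Ln 2"
  define E where "E = ES (cJ (of_nat n)) (exp w)"
  have p: "(exp w / 2)^(2*n) = exp (of_nat (2*n) * a)"
    unfolding exp_half exp_of_nat_mult a_def ..
  have e: "exp (- of_nat n * a) * exp (of_nat (2*n) * a) = exp (of_nat n * a)"
    by (simp add: exp_add[symmetric] algebra_simps)
  have "Jh (- of_nat n) w = (-1)^n * E * (exp (- of_nat n * a) * exp (of_nat (2*n) * a))"
    unfolding Jh_def ES_cJ_neg_nat p E_def[symmetric] a_def[symmetric] by (simp only: mult_ac)
  also have "\<dots> = (-1)^n * E * exp (of_nat n * a)" unfolding e ..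
  finally show ?thesis unfolding Jh_def cos_nat_pi E_def[symmetric] a_def[symmetric]
    by (simp only: mult_ac diff_self)
qed

lemma Ys_int:
  assumes "\<nu> = of_nat n"
  shows "((\<lambda>\<mu>. Yh \<mu> w) \<longlongrightarrow> Ys \<nu> w) (at \<nu>)" and "Ys \<nu> w = Nd \<nu> w / (cos (\<nu> * pi) * pi)"
proof -
  have g: "((\<lambda>\<mu>. sin (\<mu> * of_real pi)) has_field_derivative cos (\<nu> * pi) * pi) (at \<nu>)"
    by (rule DERIV_cong[OF DERIV_chain2[OF DERIV_sin DERIV_cmult_right[OF DERIV_ident]]]) simp
  have cnz: "cos (\<nu> * pi) * pi \<noteq> 0" using assms cos_nat_pi[of n] by simp
  have "((\<lambda>\<mu>. (Jh \<mu> w * cos (\<mu> * pi) - Jh (- \<mu>) w) / sin (\<mu> * pi)) \<longlongrightarrow> Nd \<nu> w / (cos (\<nu> * pi) * pi)) (at \<nu>)"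
    by (rule lhopital_complex_simple[OF N_deriv g _ _ cnz refl]) (use assms N_zero sin_nat_pi in auto)
  then have t: "((\<lambda>\<mu>. Yh \<mu> w) \<longlongrightarrow> Nd \<nu> w / (cos (\<nu> * pi) * pi)) (at \<nu>)"
    unfolding Yh_def .
  have "\<nu> \<in> \<int>" using assms by simp
  then have "Ys \<nu> w = Lim (at \<nu>) (\<lambda>\<mu>. Yh \<mu> w)" unfolding Ys_def by simp
  also have "\<dots> = Nd \<nu> w / (cos (\<nu> * pi) * pi)" by (rule tendsto_Lim[OF trivial_limit_at t])
  finally show "Ys \<nu> w = Nd \<nu> w / (cos (\<nu> * pi) * pi)" .
  then show "((\<lambda>\<mu>. Yh \<mu> w) \<longlongrightarrow> Ys \<nu> w) (at \<nu>)" using t by simp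
qed

lemma sin_nonint:
  fixes \<nu> :: complex
  assumes "\<nu> \<notin> \<int>"
  shows "sin (\<nu> * pi) \<noteq> 0"
proof
  assume "sin (\<nu> * pi) = 0"
  then obtain k :: int where k: "\<nu> * pi = of_real (of_int k * pi)" by (auto simp: sin_eq_0)
  then have "\<nu> * pi = of_int k * pi" by simp
  then have "\<nu> = of_int k" by simp
  with assms show False by simp
qed

lemma int_case:
  fixes \<nu> :: complex
  assumes "\<nu> \<in> \<int>" "\<And>n::nat. \<nu> \<noteq> - of_nat n"
  obtains n where "\<nu> = of_nat n"
proof -
  obtain k where k: "\<nu> = of_int k" using assms(1) by (elim Ints_cases)
  show thesis
  proof (cases "k \<ge> 0")
    case True
    then have "\<nu> = of_nat (nat k)" using k by simp
    then show thesis by (rule that)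
  next
    case False
    then have "\<nu> = - of_nat (nat (-k))" using k by simp
    with assms(2) show thesis by blast
  qed
qed

lemma Ys_holo:
  assumes "\<And>n::nat. \<nu> \<noteq> - of_nat n"
  shows "Ys \<nu> holomorphic_on UNIV"
proof (cases "\<nu> \<in> \<int>")
  case False
  then have "Ys \<nu> = (\<lambda>w. (Jh \<nu> w * cos (\<nu> * pi) - Jh (- \<nu>) w) / sin (\<nu> * pi))"
    unfolding Ys_def Yh_def by auto
  then show ?thesis using Jh_holo sin_nonint[OF False] by (auto intro!: holomorphic_intros)
next
  case True
  then obtain n where n: "\<nu> = of_nat n" using int_case assms by blast
  have "Ys \<nu> = (\<lambda>w. Nd \<nu> w / (cos (\<nu> * pi) * pi))" using Ys_int(2)[OF n] by auto
  moreover have "cos (\<nu> * pi) * pi \<noteq> 0" using n cos_nat_pi[of n] by simp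
  ultimately show ?thesis using Nd_holo by (auto intro!: holomorphic_intros)
qed


lemma chebU_tendsto0:
  assumes s: "sin \<theta> = 0"
  shows "((\<lambda>t. sin (of_int m * t) / sin t) \<longlongrightarrow> chebU_cos m \<theta>) (at \<theta>)"
proof -
  obtain k :: int where k: "\<theta> = of_real (of_int k * pi)" using s by (auto simp: sin_eq_0)
  have f0: "sin (of_int m * \<theta>) = 0"
  proof -
    have "of_int m * \<theta> = of_real (pi * of_int (m * k))" using k by (simp add: mult_ac)
    then have "sin (of_int m * \<theta>) = of_real (sin (pi * of_int (m * k)))" by (simp only: sin_of_real)
    then show ?thesis by (simp only: sin_npi_int of_real_0)
  qed
  have c: "cos \<theta> \<noteq> 0"
  proof
    assume "cos \<theta> = 0"
    then have "(sin \<theta>)^2 + (cos \<theta>)^2 = 0" using s by simp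
    then show False by simp
  qed
  have df: "((\<lambda>t. sin (of_int m * t)) has_field_derivative cos (of_int m * \<theta>) * of_int m) (at \<theta>)"
    by (rule DERIV_cong[OF DERIV_chain2[OF DERIV_sin DERIV_cmult[OF DERIV_ident]]]) simp
  have t: "((\<lambda>t. sin (of_int m * t) / sin t) \<longlongrightarrow> cos (of_int m * \<theta>) * of_int m / cos \<theta>) (at \<theta>)"
    by (rule lhopital_complex_simple[OF df DERIV_sin f0 s c refl])
  have "chebU_cos m \<theta> = Lim (at \<theta>) (\<lambda>t. sin (of_int m * t) / sin t)"
    unfolding chebU_cos_def using s by simp
  also have "\<dots> = cos (of_int m * \<theta>) * of_int m / cos \<theta>" by (rule tendsto_Lim[OF trivial_limit_at t])
  finally show ?thesis using t by simp
qed

lemma ev_nonint: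
  assumes "\<nu> = (of_nat n :: complex)"
  shows "eventually (\<lambda>\<mu>. \<mu> \<notin> \<int>) (at \<nu>)"
  unfolding eventually_at
proof (intro exI[of _ "1/2"] conjI ballI impI)
  fix \<mu> :: complex assume h: "\<mu> \<noteq> \<nu> \<and> dist \<mu> \<nu> < 1/2"
  show "\<mu> \<notin> \<int>"
  proof
    assume "\<mu> \<in> \<int>"
    then obtain j where j: "\<mu> = of_int j" by (elim Ints_cases)
    have e: "\<mu> - \<nu> = of_int (j - int n)" using j assms by simp
    have "dist \<mu> \<nu> = \<bar>real_of_int (j - int n)\<bar>" unfolding dist_norm e norm_of_int by simp
    then have "\<bar>real_of_int (j - int n)\<bar> < 1/2" using h by simp
    then have "j = int n" by linarith
    then show False using h j assms by simp
  qed
qed simp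

lemma chebU_tendsto:
  fixes \<nu> :: complex
  assumes "\<nu> = (of_nat n :: complex)"
  shows "((\<lambda>\<mu>. chebU_cos m (\<mu> * pi)) \<longlongrightarrow> chebU_cos m (\<nu> * pi)) (at \<nu>)"
proof -
  have s: "sin (\<nu> * pi) = 0" using assms sin_nat_pi by simp
  have L: "((\<lambda>t. sin (of_int m * t) / sin t) \<longlongrightarrow> chebU_cos m (\<nu> * pi)) (at (\<nu> * pi))"
    by (rule chebU_tendsto0[OF s])
  have "filterlim (\<lambda>\<mu>. \<mu> * of_real pi) (at (\<nu> * pi)) (at \<nu>)"
  proof (rule filterlim_atI)
    show "((\<lambda>\<mu>. \<mu> * of_real pi) \<longlongrightarrow> \<nu> * pi) (at \<nu>)" by (intro tendsto_intros)
    show "eventually (\<lambda>\<mu>. \<mu> * of_real pi \<noteq> \<nu> * pi) (at \<nu>)"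
      unfolding eventually_at by (intro exI[of _ 1]) auto
  qed
  from filterlim_compose[OF L this]
  have t: "((\<lambda>\<mu>. sin (of_int m * (\<mu> * pi)) / sin (\<mu> * pi)) \<longlongrightarrow> chebU_cos m (\<nu> * pi)) (at \<nu>)" .
  have "eventually (\<lambda>\<mu>. sin (of_int m * (\<mu> * pi)) / sin (\<mu> * pi) = chebU_cos m (\<mu> * pi)) (at \<nu>)"
    using ev_nonint[OF assms] by eventually_elim (simp add: chebU_cos_def sin_nonint)
  then show ?thesis by (rule Lim_transform_eventually[OF t])
qed

lemma chebU_sin:
  fixes \<nu> :: complex
  assumes "\<And>n::nat. \<nu> \<noteq> - of_nat n"
  shows "chebU_cos m (\<nu> * pi) * sin (\<nu> * pi) = sin (of_int m * (\<nu> * pi))"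
proof (cases "\<nu> \<in> \<int>")
  case False
  then show ?thesis using sin_nonint[OF False] by (simp add: chebU_cos_def)
next
  case True
  then obtain n where n: "\<nu> = of_nat n" using int_case assms by blast
  have "of_int m * (\<nu> * pi) = of_int (m * int n) * (of_real pi :: complex)" using n by simp
  then have "sin (of_int m * (\<nu> * pi)) = of_real (sin (of_int (m * int n) * pi))"
    by (simp only: sin_int_times_real)
  also have "\<dots> = 0" by (simp only: mult.commute[of _ pi] sin_npi_int of_real_0)
  finally have "sin (of_int m * (\<nu> * pi)) = 0" .
  then show ?thesis using n sin_nat_pi by simp
qed

lemma Ys_shift:
  assumes "\<And>n::nat. \<nu> \<noteq> - of_nat n"
  shows "Ys \<nu> (w - (of_int m :: complex) * of_real pi * \<i>) = exp (of_int m * \<nu> * pi * \<i>) * Ys \<nu> w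
           - 2 * \<i> * chebU_cos m (\<nu> * pi) * cos (\<nu> * pi) * Jh \<nu> w"
proof (cases "\<nu> \<in> \<int>")
  case False
  have c: "chebU_cos m (\<nu> * pi) = sin (of_int m * (\<nu> * pi)) / sin (\<nu> * pi)"
    using sin_nonint[OF False] by (simp add: chebU_cos_def)
  show ?thesis unfolding Ys_def using False Yh_shift[OF sin_nonint[OF False]] c by simp
next
  case True
  then obtain n where n: "\<nu> = of_nat n" using int_case assms by blast
  define w' where "w' = w - (of_int m :: complex) * of_real pi * \<i>"
  have tL: "((\<lambda>\<mu>. Yh \<mu> w') \<longlongrightarrow> Ys \<nu> w') (at \<nu>)" by (rule Ys_int(1)[OF n])
  have jc: "((\<lambda>\<mu>. Jh \<mu> w) \<longlongrightarrow> Jh \<nu> w) (at \<nu>)"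
    by (rule isContD[OF DERIV_isCont[OF Jh_param_deriv]])
  have tR: "((\<lambda>\<mu>. exp (of_int m * \<mu> * pi * \<i>) * Yh \<mu> w - 2 * \<i> * chebU_cos m (\<mu> * pi) * cos (\<mu> * pi) * Jh \<mu> w)
       \<longlongrightarrow> exp (of_int m * \<nu> * pi * \<i>) * Ys \<nu> w - 2 * \<i> * chebU_cos m (\<nu> * pi) * cos (\<nu> * pi) * Jh \<nu> w) (at \<nu>)"
    by (intro tendsto_intros Ys_int(1)[OF n] chebU_tendsto[OF n] jc)
  have ev: "eventually (\<lambda>\<mu>. exp (of_int m * \<mu> * pi * \<i>) * Yh \<mu> w - 2 * \<i> * chebU_cos m (\<mu> * pi) * cos (\<mu> * pi) * Jh \<mu> w
        = Yh \<mu> w') (at \<nu>)"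
    using ev_nonint[OF n]
  proof eventually_elim
    case (elim \<mu>)
    have c: "chebU_cos m (\<mu> * pi) = sin (of_int m * (\<mu> * pi)) / sin (\<mu> * pi)"
      using sin_nonint[OF elim] by (simp add: chebU_cos_def)
    show ?case unfolding w'_def Yh_shift[OF sin_nonint[OF elim]] c ..
  qed
  have "((\<lambda>\<mu>. Yh \<mu> w') \<longlongrightarrow> exp (of_int m * \<nu> * pi * \<i>) * Ys \<nu> w - 2 * \<i> * chebU_cos m (\<nu> * pi) * cos (\<nu> * pi) * Jh \<nu> w) (at \<nu>)"
    by (rule Lim_transform_eventually[OF tR ev])
  from tendsto_unique[OF trivial_limit_at tL this] show ?thesis unfolding w'_def .
qed


lemma final_alg:
  fixes G T T1 J Y L A Z P Q E X U c M pc :: complex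
  assumes "P * Q = 1" "E * X = 1" "U * (E - X) = P - Q" "c = (E + X) / 2" "T1 = 2 * T"
  shows "G * (T1 * (Q * J) * (L - M * pc * \<i>) - T * pc * (P * Y - 2 * \<i> * U * c * J) - Q * Z / 4 * A)
    = Q * (G * (T1 * J * L - T * pc * Y - Z / 4 * A))
      + (pc * T * \<i> * Q * G * (U * (P * E) - M)) * (J + \<i> * Y)
      + (pc * T * \<i> * Q * G * (U * (P * X) - M)) * (J - \<i> * Y)"
proof -
  have ii: "\<i> * \<i> = (-1::complex)" by simp
  show ?thesis using assms ii by algebra
qed

theorem lemma3p5:
  fixes \<nu> \<zeta> :: complex and m :: int
  assumes "\<And>n::nat. \<nu> \<noteq> - of_nat n"
    and "\<zeta> \<noteq> 0" and "- pi < Arg \<zeta>" and "Arg \<zeta> < pi"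
  shows "\<exists>F. F holomorphic_on UNIV
           \<and> (\<forall>w. - pi < Im w \<and> Im w < pi \<longrightarrow> F w = lommelS \<nu> (exp w))
           \<and> F (Ln \<zeta> - of_int m * pi * \<i>) =
               exp (- of_int m * \<nu> * pi * \<i>) * lommelS \<nu> \<zeta>
               + (pi * 2 powr (\<nu> - 2) * \<i> * exp (- of_int m * \<nu> * pi * \<i>) * Gamma \<nu>
                  * (chebU_cos m (\<nu> * pi) * exp ((of_int m + 1) * \<nu> * pi * \<i>) - of_int m))
                 * hankel1 \<nu> \<zeta>
               + (pi * 2 powr (\<nu> - 2) * \<i> * exp (- of_int m * \<nu> * pi * \<i>) * Gamma \<nu>
                  * (chebU_cos m (\<nu> * pi) * exp ((of_int m - 1) * \<nu> * pi * \<i>) - of_int m))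
                 * hankel2 \<nu> \<zeta>"

proof -
  define L where "L = Ln \<zeta>"
  have expL: "exp L = \<zeta>" using assms(2) by (simp add: L_def)
  have ImL: "Im L = Arg \<zeta>" using assms(2) by (simp add: L_def Arg_eq_Im_Ln)
  have s1: "- pi < Im L" "Im L < pi" using assms(3,4) ImL by auto
  define w0 where "w0 = L - (of_int m :: complex) * of_real pi * \<i>"
  have w0eq: "Ln \<zeta> - of_int m * pi * \<i> = w0" unfolding w0_def L_def by simp
  define J where "J = besselJ \<nu> \<zeta>"
  define Y where "Y = besselY \<nu> \<zeta>"
  define A where "A = ES (cA \<nu>) \<zeta>"
  define Z where "Z = \<zeta> powr \<nu>"
  define P where "P = exp (of_int m * \<nu> * pi * \<i>)"
  define Q where "Q = exp (- of_int m * \<nu> * pi * \<i>)"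
  define E where "E = exp (\<nu> * pi * \<i>)"
  define X where "X = exp (- (\<nu> * pi * \<i>))"
  define U where "U = chebU_cos m (\<nu> * pi)"
  define c where "c = cos (\<nu> * pi)"
  define G where "G = Gamma \<nu>"
  define T where "T = (2::complex) powr (\<nu> - 2)"
  define T1 where "T1 = (2::complex) powr (\<nu> - 1)"
  have JL: "Jh \<nu> L = J" unfolding J_def using besselJ_strip[OF s1, of \<nu>] expL by simp
  have YL: "Ys \<nu> L = Y" unfolding Y_def using besselY_strip[OF s1, of \<nu>] expL by simp
  have ZL: "exp (\<nu> * L) = Z" unfolding Z_def powr_def L_def using assms(2) by (simp add: mult.commute)
  have J0: "Jh \<nu> w0 = Q * J" unfolding w0_def Jh_shift JL Q_def ..
  have Y0: "Ys \<nu> w0 = P * Y - 2 * \<i> * U * c * J"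
    unfolding w0_def Ys_shift[OF assms(1)] YL JL P_def U_def c_def ..
  have E0: "exp (\<nu> * w0) = Q * Z"
  proof -
    have "exp (\<nu> * w0) = exp (- of_int m * \<nu> * pi * \<i>) * exp (\<nu> * L)"
      unfolding w0_def by (simp add: exp_add[symmetric] algebra_simps)
    then show ?thesis unfolding ZL Q_def .
  qed
  have A0: "ES (cA \<nu>) (exp w0) = A"
  proof -
    have "exp w0 = \<zeta> * exp (- ((of_int m :: complex) * of_real pi * \<i>))"
      unfolding w0_def using expL by (simp add: exp_diff exp_minus divide_inverse)
    then show ?thesis unfolding A_def by (simp add: ES_sign[OF exp_shift_sq])
  qed
  have S0: "lommelS \<nu> \<zeta> = G * (T1 * J * L - T * pi * Y - Z / 4 * A)"
  proof -
    have "lommelS \<nu> \<zeta> = FF \<nu> L" using lommelS_strip[OF s1, of \<nu>] expL by simp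
    also have "\<dots> = G * (T1 * J * L - T * pi * Y - Z / 4 * A)"
      unfolding FF_def JL YL ZL expL G_def T_def T1_def A_def ..
    finally show ?thesis .
  qed
  have F0: "FF \<nu> w0 = G * (T1 * (Q * J) * (L - (of_int m :: complex) * of_real pi * \<i>) - T * pi * (P * Y - 2 * \<i> * U * c * J) - Q * Z / 4 * A)"
    unfolding FF_def J0 Y0 E0 A0 G_def T_def T1_def
    by (simp only: w0_def)
  have hPQ: "P * Q = 1" unfolding P_def Q_def by (rule exp_mpi_prod)
  have hEX: "E * X = 1" unfolding E_def X_def by (simp add: exp_minus)
  have sE: "sin (\<nu> * pi) = (E - X) / (2 * \<i>)"
    unfolding E_def X_def sin_exp_eq by (simp add: mult_ac)
  have cE: "c = (E + X) / 2"
    unfolding E_def X_def c_def cos_exp_eq by (simp add: mult_ac)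
  have hU: "U * (E - X) = P - Q"
  proof -
    have "U * ((E - X) / (2 * \<i>)) = (P - Q) / (2 * \<i>)"
      using chebU_sin[OF assms(1), of m] unfolding sE sin_m_exp U_def P_def Q_def .
    then show ?thesis by (simp add: field_simps)
  qed
  have hT: "T1 = 2 * T"
    unfolding T1_def T_def using powr_add[of "2::complex" "\<nu> - 2" 1] by simp
  have eP: "exp ((of_int m + 1) * \<nu> * pi * \<i>) = P * E"
    unfolding P_def E_def by (simp add: exp_add[symmetric] algebra_simps)
  have eM: "exp ((of_int m - 1) * \<nu> * pi * \<i>) = P * X"
    unfolding P_def X_def by (simp add: exp_add[symmetric] algebra_simps)
  have key: "FF \<nu> w0 = exp (- of_int m * \<nu> * pi * \<i>) * lommelS \<nu> \<zeta>                + (pi * 2 powr (\<nu> - 2) * \<i> * exp (- of_int m * \<nu> * pi * \<i>) * Gamma \<nu>                   * (chebU_cos m (\<nu> * pi) * exp ((of_int m + 1) * \<nu> * pi * \<i>) - of_int m))                  * hankel1 \<nu> \<zeta>                + (pi * 2 powr (\<nu> - 2) * \<i> * exp (- of_int m * \<nu> * pi * \<i>) * Gamma \<nu>                   * (chebU_cos m (\<nu> * pi) * exp ((of_int m - 1) * \<nu> * pi * \<i>) - of_int m))                  * hankel2 \<nu> \<zeta>"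
    unfolding F0 S0 eP eM hankel1_def hankel2_def Q_def[symmetric] G_def[symmetric] T_def[symmetric]
      J_def[symmetric] Y_def[symmetric] U_def[symmetric]
    by (rule final_alg[OF hPQ hEX hU cE hT])
  show ?thesis
  proof (intro exI[of _ "FF \<nu>"] conjI allI impI)
    show "FF \<nu> holomorphic_on UNIV"
      unfolding FF_def[abs_def]
      by (intro holomorphic_intros Jh_holo Ys_holo[OF assms(1)] holo_exp_comp[OF ES_cA_holo[OF assms(1)]]) auto
  next
    fix w :: complex assume "- pi < Im w \<and> Im w < pi"
    then show "FF \<nu> w = lommelS \<nu> (exp w)" using lommelS_strip[of w \<nu>] by simp
  next
    show "FF \<nu> (Ln \<zeta> - of_int m * pi * \<i>) = exp (- of_int m * \<nu> * pi * \<i>) * lommelS \<nu> \<zeta>                + (pi * 2 powr (\<nu> - 2) * \<i> * exp (- of_int m * \<nu> * pi * \<i>) * Gamma \<nu>                   * (chebU_cos m (\<nu> * pi) * exp ((of_int m + 1) * \<nu> * pi * \<i>) - of_int m))                  * hankel1 \<nu> \<zeta>                + (pi * 2 powr (\<nu> - 2) * \<i> * exp (- of_int m * \<nu> * pi * \<i>) * Gamma \<nu>                   * (chebU_cos m (\<nu> * pi) * exp ((of_int m - 1) * \<nu> * pi * \<i>) - of_int m))                  * hankel2 \<nu> \<zeta>"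
      unfolding w0eq by (rule key)
  qed
qed


end
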